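(* Let $p\ge 2$ and let $a,b\in\mathbb{F}_p$ be nonzero binary floating-point numbers of precision $p$ such that $\mathrm{ufp}(a)\le \mathrm{ufp}(b)$ and $\mathrm{uls}(a)\ge \mathrm{ulp}(b)$. Compute $$s=\circ_1(a+b),\qquad t=\circ_3\bigl(b-\circ_2(s-a)\bigr),$$ where each of $\circ_1,\circ_2,\circ_3$ is a faithful rounding. The three roundings may be different from one another, i.e. each independently rounds down or up. Then $s+t=a+b$.
   Context: $\mathbb{F}_p$ denotes the set of radix-2 floating-point numbers of precision $p$ with unbounded exponent range, so there is no underflow or overflow. Every nonzero $x\in\mathbb{F}_p$ can be written as $x=\pm M\cdot 2^{e}$ with $M,e\in\mathbb{Z}$ and $2^{p-1}\le M<2^p$. For such $x$: - $\mathrm{ufp}(x)=2^{\lfloor\log_2|x|\rfloor}$ is the unit in the first place; - $\mathrm{ulp}(x)=2^{1-p}\,\mathrm{ufp}(x)$ is the unit in the last place; - $\mathrm{uls}(x)$ is the unit in the last significant place, i.e. the largest power of $2$ dividing $x$. A faithful rounding $\circ(y)$ of a real number $y$ is any element of $\{\mathrm{RD}(y),\mathrm{RU}(y)\}$, where $\mathrm{RD}$ and $\mathrm{RU}$ are rounding toward $-\infty$ and toward $+\infty$. In particular $\circ(y)=y$ whenever $y\in\mathbb{F}_p$. The displayed computation is the Fast2Sum algorithm with faithful roundings. *)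

theory Defs
  imports Complex_Main
begin

definition fp :: "nat \<Rightarrow> real set" where
  "fp p = {x. x = 0 \<or> (\<exists>M e :: int. 2^(p-1) \<le> M \<and> M < 2^p \<and>
                 (x = of_int M * 2 powi e \<or> x = - (of_int M * 2 powi e)))}"

definition ufp :: "real \<Rightarrow> real" where
  "ufp x = 2 powi \<lfloor>log 2 \<bar>x\<bar>\<rfloor>"

definition ulp :: "nat \<Rightarrow> real \<Rightarrow> real" where
  "ulp p x = 2 powi (1 - int p) * ufp x"

definition uls :: "real \<Rightarrow> real" where
  "uls x = (GREATEST u. \<exists>k :: int. u = 2 powi k \<and> (\<exists>n :: int. x = of_int n * u))"

definition RD :: "nat \<Rightarrow> real \<Rightarrow> real" where
  "RD p y = (GREATEST x. x \<in> fp p \<and> x \<le> y)"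

definition RU :: "nat \<Rightarrow> real \<Rightarrow> real" where
  "RU p y = (LEAST x. x \<in> fp p \<and> y \<le> x)"

definition faithful :: "nat \<Rightarrow> real \<Rightarrow> real \<Rightarrow> bool" where
  "faithful p y r \<longleftrightarrow> r = RD p y \<or> r = RU p y"

end

theory Submission
  imports Defs
begin

lemma p2pos: "(0::real) < 2 powi k" by simp

lemma floor_log2:
  assumes "2 powi k \<le> (x::real)" "x < 2 powi (k+1)"
  shows "\<lfloor>log 2 x\<rfloor> = k"
proof -
  have x0: "x > 0" using assms(1) p2pos[of k] by linarith
  have a: "2 powi k = (2::real) powr (real_of_int k)" by (simp add: powr_real_of_int')
  have b: "2 powi (k+1) = (2::real) powr (real_of_int k + 1)" using powr_real_of_int'[of 2 "k+1"] by simp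
  have "real_of_int k \<le> log 2 x" using x0 assms(1) a by (simp add: le_log_iff)
  moreover have "log 2 x < real_of_int k + 1" using x0 assms(2) b by (simp add: log_less_iff)
  ultimately show ?thesis by (simp add: floor_eq_iff)
qed

lemma fp_repr:
  assumes "x \<in> fp p" "x \<noteq> 0"
  shows "\<exists>M e::int. 2^(p-1) \<le> M \<and> M < 2^p \<and> \<bar>x\<bar> = of_int M * 2 powi e"
proof -
  obtain M e :: int where h: "2^(p-1) \<le> M" "M < 2^p" "x = of_int M * 2 powi e \<or> x = - (of_int M * 2 powi e)"
    using assms unfolding fp_def by auto
  have "M \<ge> 0" using h(1) by (smt (verit) zero_le_power)
  then have "\<bar>x\<bar> = of_int M * 2 powi e" using h(3) by (auto simp: abs_mult)
  then show ?thesis using h by blast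
qed

lemma powi_split: "p \<ge> 1 \<Longrightarrow> (2::real) powi (e + int p - 1) = 2^(p-1) * 2 powi e"
proof -
  assume "p \<ge> 1"
  then have "e + int p - 1 = e + int (p-1)" by simp
  then have "(2::real) powi (e + int p - 1) = 2 powi (e + int (p-1))" by (rule arg_cong)
  also have "\<dots> = 2 powi e * 2 powi (int (p-1))" by (rule power_int_add) simp
  finally show ?thesis by (simp only: power_int_of_nat mult.commute)
qed

lemma ufp_eq:
  assumes "p \<ge> 1" "2^(p-1) \<le> M" "M < (2::int)^p" "\<bar>x\<bar> = of_int M * 2 powi e"
  shows "ufp x = 2 powi (e + int p - 1)"
proof -
  have "(2::real) powi (e + int p - 1) = 2^(p-1) * 2 powi e"
    using assms(1) by (rule powi_split)
  also have "\<dots> \<le> \<bar>x\<bar>" using assms(2,4)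
    by (metis mult_right_mono of_int_le_iff of_int_numeral of_int_power zero_le_power_int zero_le_numeral)
  finally have 1: "(2::real) powi (e + int p - 1) \<le> \<bar>x\<bar>" .
  have "\<bar>x\<bar> < 2^p * 2 powi e" using assms(3,4)
    by (metis mult_strict_right_mono of_int_less_iff of_int_numeral of_int_power zero_less_power_int zero_less_numeral)
  also have "\<dots> = 2 powi (e + int p - 1 + 1)" by (simp add: power_int_add)
  finally show ?thesis unfolding ufp_def using floor_log2[OF 1] by simp
qed

lemma RD_eq:
  assumes "x \<in> fp p" "x \<le> y" "\<And>z. z \<in> fp p \<Longrightarrow> z \<le> y \<Longrightarrow> z \<le> x"
  shows "RD p y = x"
  unfolding RD_def using assms by (intro Greatest_equality) auto

lemma RU_eq:
  assumes "x \<in> fp p" "y \<le> x" "\<And>z. z \<in> fp p \<Longrightarrow> y \<le> z \<Longrightarrow> x \<le> z"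
  shows "RU p y = x"
  unfolding RU_def using assms by (intro Least_equality) auto

lemma faithful_exact:
  assumes "y \<in> fp p" "faithful p y r" shows "r = y"
proof -
  have "RD p y = y" by (rule RD_eq) (use assms in auto)
  moreover have "RU p y = y" by (rule RU_eq) (use assms in auto)
  ultimately show ?thesis using assms(2) unfolding faithful_def by auto
qed

lemma normalize_aux:
  fixes m :: int
  assumes "0 < m" "m < 2^p" "2^(p-1) \<le> m * 2^d"
  shows "\<exists>M e::int. 2^(p-1) \<le> M \<and> M < 2^p \<and> real_of_int m = of_int M * 2 powi e"
  using assms
proof (induction d arbitrary: m)
  case 0
  then show ?case by (intro exI[of _ m] exI[of _ 0]) simp
next
  case (Suc d)
  show ?case
  proof (cases "2^(p-1) \<le> m")
    case True
    then show ?thesis using Suc.prems by (intro exI[of _ m] exI[of _ 0]) simp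
  next
    case False
    have "p \<ge> 1" using Suc.prems(1,2) by (cases p) auto
    then have "(2::int)^p = 2 * 2^(p-1)" using power_minus_mult[of p "2::int"] by (simp add: mult.commute)
    then have "2*m < 2^p" using False by linarith
    moreover have "2^(p-1) \<le> (2*m) * 2^d" using Suc.prems(3) by (simp add: ac_simps)
    ultimately obtain M e where h: "2^(p-1) \<le> M" "M < 2^p" "real_of_int (2*m) = of_int M * 2 powi e"
      using Suc.IH[of "2*m"] Suc.prems(1) by auto
    have pd: "(2::real) powi (e - 1) = 2 powi e / 2" using power_int_diff[of "2::real" e 1] by simp
    have "real_of_int m = of_int M * 2 powi (e - 1)"
      unfolding pd using h(3) by simp
    then show ?thesis using h(1,2) by blast
  qed
qed

lemma fp_intmul:
  fixes n f :: int
  assumes "p \<ge> 1" "\<bar>n\<bar> \<le> 2^p"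
  shows "of_int n * 2 powi f \<in> fp p"
proof (cases "n = 0")
  case True then show ?thesis by (simp add: fp_def)
next
  case False
  have "\<exists>M e::int. 2^(p-1) \<le> M \<and> M < 2^p \<and> real_of_int \<bar>n\<bar> = of_int M * 2 powi e"
  proof (cases "\<bar>n\<bar> = 2^p")
    case True
    have "(2::int)^p = 2^(p-1) * 2" using assms(1) power_minus_mult[of p "2::int"] by simp
    then have "real_of_int \<bar>n\<bar> = of_int (2^(p-1)) * 2 powi 1" using True by simp
    moreover have "(2::int)^(p-1) < 2^p" using assms(1) by simp
    ultimately show ?thesis by blast
  next
    case False
    have "(1::int) \<le> 2^p" by simp
    moreover have "(2::int)^(p-1) \<le> 2^p" by (simp add: power_increasing)
    moreover have "1 * 2^p \<le> \<bar>n\<bar> * (2::int)^p" using \<open>n \<noteq> 0\<close>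
      by (intro mult_right_mono) auto
    ultimately have "2^(p-1) \<le> \<bar>n\<bar> * 2^p" by linarith
    then show ?thesis using normalize_aux[of "\<bar>n\<bar>" p p] False assms(2) \<open>n \<noteq> 0\<close> by simp
  qed
  then obtain M e :: int where h: "2^(p-1) \<le> M" "M < 2^p" "real_of_int \<bar>n\<bar> = of_int M * 2 powi e" by blast
  have "real_of_int n * 2 powi f = of_int M * 2 powi (e + f) \<or> real_of_int n * 2 powi f = - (of_int M * 2 powi (e + f))"
  proof -
    have pe: "(2::real) powi (e + f) = 2 powi e * 2 powi f" by (rule power_int_add) simp
    have "real_of_int n = of_int M * 2 powi e \<or> real_of_int n = - (of_int M * 2 powi e)"
      using h(3) by (cases "n \<ge> 0") auto
    then show ?thesis unfolding pe by (auto simp: ac_simps)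
  qed
  then show ?thesis unfolding fp_def using h(1,2) by blast
qed

lemma powi_le_exp: "(2::real) powi a \<le> 2 powi b \<Longrightarrow> a \<le> b"
  by (metis not_le power_int_strict_increasing one_less_numeral_iff semiring_norm(76))

lemma powi_less_exp: "(2::real) powi a < 2 powi b \<Longrightarrow> a < b"
  by (metis not_le power_int_increasing one_le_numeral)

lemma powi_shift: "g \<le> e \<Longrightarrow> (2::real) powi e = of_int (2^nat (e-g)) * 2 powi g"
proof -
  assume "g \<le> e"
  then have "e = int (nat (e-g)) + g" by simp
  then have "(2::real) powi e = 2 powi (int (nat (e-g)) + g)" by (rule arg_cong)
  also have "\<dots> = 2 powi int (nat (e-g)) * 2 powi g" by (rule power_int_add) simp
  also have "\<dots> = 2 ^ nat (e-g) * 2 powi g" by (simp only: power_int_of_nat)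
  finally show ?thesis by simp
qed

lemma fp_big:
  assumes "x \<in> fp p" "2 powi (f + int p) \<le> \<bar>x\<bar>"
  shows "\<exists>k::int. x = of_int k * 2 powi (f+1)"
proof -
  have "x \<noteq> 0" using assms(2) by (smt (verit) zero_less_power_int zero_less_numeral)
  then obtain M e :: int where h: "2^(p-1) \<le> M" "M < 2^p" "\<bar>x\<bar> = of_int M * 2 powi e"
    using fp_repr[OF assms(1)] by blast
  have "\<bar>x\<bar> < 2^p * 2 powi e" using h(2,3)
    by (metis mult_strict_right_mono of_int_less_iff of_int_numeral of_int_power zero_less_power_int zero_less_numeral)
  also have "\<dots> = 2 powi (e + int p)" by (simp add: power_int_add)
  finally have "2 powi (f + int p) < (2::real) powi (e + int p)" using assms(2) by linarith
  then have "f + int p < e + int p" by (rule powi_less_exp)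
  then have "f + 1 \<le> e" by simp
  from powi_shift[OF this] have e: "\<bar>x\<bar> = of_int (M * 2^nat (e-(f+1))) * 2 powi (f+1)"
    using h(3) by simp
  show ?thesis
  proof (cases "x \<ge> 0")
    case True then show ?thesis using e by (intro exI[of _ "M * 2^nat (e-(f+1))"]) simp
  next
    case False then show ?thesis using e by (intro exI[of _ "- (M * 2^nat (e-(f+1)))"]) simp
  qed
qed

lemma uls_mult:
  assumes "a \<in> fp p" "a \<noteq> 0" "uls a \<ge> 2 powi g"
  shows "\<exists>n::int. a = of_int n * 2 powi g"
proof -
  obtain M e :: int where h: "2^(p-1) \<le> M" "M < 2^p" "\<bar>a\<bar> = of_int M * 2 powi e"
    using fp_repr[OF assms(1,2)] by blast
  define K where "K = {k. \<exists>n::int. a = of_int n * 2 powi k}"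
  have eK: "e \<in> K" unfolding K_def mem_Collect_eq
  proof (cases "a \<ge> 0")
    case True then show "\<exists>n::int. a = of_int n * 2 powi e" using h(3) by (intro exI[of _ M]) simp
  next
    case False then show "\<exists>n::int. a = of_int n * 2 powi e" using h(3) by (intro exI[of _ "-M"]) simp
  qed
  have alt: "\<bar>a\<bar> < 2 powi (e + int p)"
  proof -
    have "\<bar>a\<bar> < 2^p * 2 powi e" using h(2,3)
      by (metis mult_strict_right_mono of_int_less_iff of_int_numeral of_int_power zero_less_power_int zero_less_numeral)
    also have "\<dots> = 2 powi (e + int p)" by (simp add: power_int_add)
    finally show ?thesis .
  qed
  have bound: "k < e + int p" if kK: "k \<in> K" for k
  proof -
    obtain n :: int where n: "a = of_int n * 2 powi k" using kK unfolding K_def by blast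
    then have "n \<noteq> 0" using assms(2) by auto
    then have "1 \<le> \<bar>real_of_int n\<bar>" by linarith
    then have "2 powi k \<le> \<bar>a\<bar>" using n by (simp add: abs_mult)
    then have "(2::real) powi k < 2 powi (e + int p)" using alt by linarith
    then show ?thesis by (rule powi_less_exp)
  qed
  define S where "S = {k \<in> K. e \<le> k}"
  have "S \<subseteq> {e..e + int p}"
  proof
    fix k assume "k \<in> S"
    then have "k \<in> K" "e \<le> k" unfolding S_def by auto
    then show "k \<in> {e..e + int p}" using bound[of k] by simp
  qed
  then have fin: "finite S" by (rule finite_subset) simp
  have ne: "S \<noteq> {}" using eK unfolding S_def by auto
  define k0 where "k0 = Max S"
  have k0S: "k0 \<in> S" unfolding k0_def using fin ne by simp
  have k0max: "k \<le> k0" if "k \<in> K" for k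
  proof (cases "e \<le> k")
    case True then show ?thesis unfolding k0_def using fin that S_def by auto
  next
    case False then show ?thesis using k0S S_def by auto
  qed
  have "uls a = 2 powi k0"
    unfolding uls_def
  proof (rule Greatest_equality)
    show "\<exists>k. 2 powi k0 = 2 powi k \<and> (\<exists>n::int. a = of_int n * 2 powi k0)"
      using k0S unfolding S_def K_def by auto
  next
    fix y assume "\<exists>k. y = 2 powi k \<and> (\<exists>n::int. a = of_int n * y)"
    then obtain k where "y = 2 powi k" "k \<in> K" unfolding K_def by auto
    then show "y \<le> 2 powi k0" using k0max power_int_increasing[of k k0 "2::real"] by auto
  qed
  then have "(2::real) powi g \<le> 2 powi k0" using assms(3) by simp
  then have "g \<le> k0" by (rule powi_le_exp)
  obtain n :: int where n: "a = of_int n * 2 powi k0" using k0S unfolding S_def K_def by blast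
  show ?thesis using n powi_shift[OF \<open>g \<le> k0\<close>] by (intro exI[of _ "n * 2^nat (k0-g)"]) simp
qed

theorem lemma2:
  fixes p :: nat and a b s u t :: real
  assumes "p \<ge> 2"
    and "a \<in> fp p" and "b \<in> fp p" and "a \<noteq> 0" and "b \<noteq> 0"
    and "ufp a \<le> ufp b"
    and "uls a \<ge> ulp p b"
    and "faithful p (a + b) s"
    and "faithful p (s - a) u"
    and "faithful p (b - u) t"
  shows "s + t = a + b"
proof -
  have p1: "p \<ge> 1" using assms(1) by simp
  obtain Ma ea :: int where ha: "2^(p-1) \<le> Ma" "Ma < 2^p" "\<bar>a\<bar> = of_int Ma * 2 powi ea"
    using fp_repr[OF assms(2,4)] by blast
  obtain Mb eb :: int where hb: "2^(p-1) \<le> Mb" "Mb < 2^p" "\<bar>b\<bar> = of_int Mb * 2 powi eb"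
    using fp_repr[OF assms(3,5)] by blast
  have ufpa: "ufp a = 2 powi (ea + int p - 1)" using ufp_eq[OF p1 ha] .
  have ufpb: "ufp b = 2 powi (eb + int p - 1)" using ufp_eq[OF p1 hb] .
  have "(2::real) powi (ea + int p - 1) \<le> 2 powi (eb + int p - 1)" using assms(6) ufpa ufpb by simp
  then have "ea + int p - 1 \<le> eb + int p - 1" by (rule powi_le_exp)
  then have eab: "ea \<le> eb" by simp
  define w :: real where "w = 2 powi eb"
  have w0: "w > 0" unfolding w_def by simp
  have "ulp p b = 2 powi ((1 - int p) + (eb + int p - 1))"
    unfolding ulp_def ufpb by (rule power_int_add[symmetric]) simp
  then have ulpb: "ulp p b = w" unfolding w_def by simp
  obtain na :: int where na: "a = of_int na * w"
    using uls_mult[OF assms(2,4), of eb] assms(7) ulpb unfolding w_def by auto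
  have Pw: "2 powi (eb + int p) = 2^p * w" unfolding w_def by (simp add: power_int_add)
  have "\<bar>a\<bar> < 2^p * 2 powi ea" using ha(2,3)
    by (metis mult_strict_right_mono of_int_less_iff of_int_numeral of_int_power zero_less_power_int zero_less_numeral)
  also have "\<dots> = 2 powi (ea + int p)" by (simp add: power_int_add)
  also have "\<dots> \<le> 2 powi (eb + int p)" using eab by (intro power_int_increasing) auto
  finally have "\<bar>real_of_int na\<bar> * w < 2^p * w" using na Pw w0 by (simp add: abs_mult)
  then have "\<bar>real_of_int na\<bar> < 2^p" using w0 by simp
  then have "real_of_int \<bar>na\<bar> < real_of_int (2^p)" by simp
  then have nab: "\<bar>na\<bar> < 2^p" by (simp only: of_int_less_iff)
  have Mb0: "Mb \<ge> 0" using hb(1) by (smt (verit) zero_le_power)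
  have Mbb: "\<bar>Mb\<bar> < 2^p" "\<bar>-Mb\<bar> < 2^p" using Mb0 hb(2) by auto
  obtain nb :: int where nb: "b = of_int nb * w" "\<bar>nb\<bar> < 2^p"
  proof (cases "b \<ge> 0")
    case True then show ?thesis using that[of Mb] hb Mbb unfolding w_def by auto
  next
    case False then show ?thesis using that[of "-Mb"] hb Mbb unfolding w_def by auto
  qed
  define n where "n = na + nb"
  have y: "a + b = of_int n * w" unfolding n_def using na nb by (simp add: algebra_simps)
  have nbound: "\<bar>n\<bar> < 2 * 2^p" unfolding n_def using nab nb(2) by simp
  have key: "\<exists>m::int. s = of_int m * w \<and> \<bar>m - n\<bar> \<le> 1"
  proof (cases "\<bar>n\<bar> \<le> 2^p")
    case True
    then have "a + b \<in> fp p" using y fp_intmul[OF p1 True, of eb] unfolding w_def by simp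
    then have "s = a + b" using faithful_exact assms(8) by blast
    then show ?thesis using y by auto
  next
    case False
    define d where "d = n div 2"
    define c where "c = (n + 1) div 2"
    have W2: "2 powi (eb + 1) = 2 * w" unfolding w_def by (simp add: power_int_add)
    have dfp: "of_int (2*d) * w \<in> fp p"
    proof -
      have "\<bar>d\<bar> \<le> 2^p" unfolding d_def using nbound by linarith
      then have "of_int d * 2 powi (eb+1) \<in> fp p" by (rule fp_intmul[OF p1])
      then show ?thesis using W2 by (simp add: ac_simps)
    qed
    have cfp: "of_int (2*c) * w \<in> fp p"
    proof -
      have "\<bar>c\<bar> \<le> 2^p" unfolding c_def using nbound by linarith
      then have "of_int c * 2 powi (eb+1) \<in> fp p" by (rule fp_intmul[OF p1])
      then show ?thesis using W2 by (simp add: ac_simps)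
    qed
    have big: "\<exists>k::int. z = of_int (2*k) * w" if zz: "z \<in> fp p" "2^p * w \<le> \<bar>z\<bar>" for z
    proof -
      obtain k :: int where "z = of_int k * 2 powi (eb+1)" using fp_big[OF zz(1), of eb] zz(2) Pw by auto
      then show ?thesis using W2 by (intro exI[of _ k]) simp
    qed
    have RDy: "RD p (a+b) = of_int (2*d) * w"
    proof (rule RD_eq[OF dfp])
      show "of_int (2*d) * w \<le> a + b" unfolding y using w0 d_def by simp
    next
      fix z assume z: "z \<in> fp p" "z \<le> a + b"
      show "z \<le> of_int (2*d) * w"
      proof (cases "2^p * w \<le> \<bar>z\<bar>")
        case True
        then obtain k :: int where k: "z = of_int (2*k) * w" using big z(1) by blast
        then have "2*k \<le> n" using z(2) y w0 by simp
        then have "2*k \<le> 2*d" unfolding d_def by presburger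
        then show ?thesis using k w0 by simp
      next
        case F: False
        show ?thesis
        proof (cases "n > 0")
          case True
          then have "2^p \<le> 2*d" using False unfolding d_def by presburger
          then have "(2^p) * w \<le> of_int (2*d) * w" using w0
            by (metis mult_right_mono of_int_le_iff of_int_numeral of_int_power less_imp_le)
          then show ?thesis using F by linarith
        next
          case nF: False
          then have "n \<le> -(2^p)" using False by linarith
          then have "of_int n * w \<le> - (2^p) * w" using w0
            by (metis mult_right_mono of_int_le_iff of_int_numeral of_int_power of_int_minus less_imp_le)
          then show ?thesis using F z(2) y by linarith
        qed
      qed
    qed
    have RUy: "RU p (a+b) = of_int (2*c) * w"
    proof (rule RU_eq[OF cfp])
      show "a + b \<le> of_int (2*c) * w" unfolding y using w0 c_def by simp
    next
      fix z assume z: "z \<in> fp p" "a + b \<le> z"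
      show "of_int (2*c) * w \<le> z"
      proof (cases "2^p * w \<le> \<bar>z\<bar>")
        case True
        then obtain k :: int where k: "z = of_int (2*k) * w" using big z(1) by blast
        then have "n \<le> 2*k" using z(2) y w0 by simp
        then have "2*c \<le> 2*k" unfolding c_def by presburger
        then show ?thesis using k w0 by simp
      next
        case F: False
        show ?thesis
        proof (cases "n > 0")
          case True
          then have "2^p \<le> n" using False by linarith
          then have "(2^p) * w \<le> of_int n * w" using w0
            by (metis mult_right_mono of_int_le_iff of_int_numeral of_int_power less_imp_le)
          then show ?thesis using F z(2) y by linarith
        next
          case nF: False
          then have "2*c \<le> -(2^p)" using False unfolding c_def by presburger
          then have "of_int (2*c) * w \<le> - (2^p) * w" using w0
            by (metis mult_right_mono of_int_le_iff of_int_numeral of_int_power of_int_minus less_imp_le)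
          then show ?thesis using F by linarith
        qed
      qed
    qed
    have "\<bar>2*d - n\<bar> \<le> 1" "\<bar>2*c - n\<bar> \<le> 1" unfolding d_def c_def by linarith+
    then show ?thesis using assms(8) RDy RUy unfolding faithful_def by blast
  qed
  then obtain m :: int where m: "s = of_int m * w" "\<bar>m - n\<bar> \<le> 1" by blast
  have sa: "s - a = of_int (m - na) * w" using m na by (simp add: algebra_simps)
  have "\<bar>m - na\<bar> \<le> 2^p" using m(2) nb(2) unfolding n_def by linarith
  then have "s - a \<in> fp p" using sa fp_intmul[OF p1, of "m - na" eb] unfolding w_def by simp
  then have uu: "u = s - a" using faithful_exact assms(9) by blast
  have bu: "b - u = of_int (n - m) * w" using uu m y by (simp add: algebra_simps)
  have "\<bar>n - m\<bar> \<le> 2^p" using m(2) by (smt (verit) one_le_power)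
  then have "b - u \<in> fp p" using bu fp_intmul[OF p1, of "n - m" eb] unfolding w_def by simp
  then have "t = b - u" using faithful_exact assms(10) by blast
  then show ?thesis using uu by simp
qed
end
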